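(* For any graph $H$ and any positive integer $r$, $H$ is (isomorphic to) a subgraph of $G(\mathbb{Z}^2, \sqrt{r})$ if and only if $H$ is (isomorphic to) a subgraph of $G(\mathbb{Z}^2, \sqrt{2r})$.
   Context: For $X \subseteq \mathbb{R}^m$ and $d>0$, $G(X,d)$ denotes the Euclidean distance graph with vertex set $X$ in which two vertices are adjacent if and only if their Euclidean distance is exactly $d$. *)

theory Defs
  imports "HOL-Analysis.Analysis"
begin

definition simple_graph :: "'a set \<Rightarrow> ('a \<Rightarrow> 'a \<Rightarrow> bool) \<Rightarrow> bool" where
  "simple_graph V E \<longleftrightarrow> finite V \<and>
     (\<forall>u v. E u v \<longrightarrow> u \<in> V \<and> v \<in> V \<and> u \<noteq> v \<and> E v u)"

definition edg_adj :: "'b::euclidean_space set \<Rightarrow> real \<Rightarrow> 'b \<Rightarrow> 'b \<Rightarrow> bool" where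
  "edg_adj X d x y \<longleftrightarrow> x \<in> X \<and> y \<in> X \<and> dist x y = d"

definition Z2 :: "(real^2) set" where
  "Z2 = {x. \<forall>i. x $ i \<in> \<int>}"

definition subgraph_of_edg :: "'a set \<Rightarrow> ('a \<Rightarrow> 'a \<Rightarrow> bool) \<Rightarrow> 'b::euclidean_space set \<Rightarrow> real \<Rightarrow> bool" where
  "subgraph_of_edg V E X d \<longleftrightarrow>
     (\<exists>f. inj_on f V \<and> f ` V \<subseteq> X \<and> (\<forall>u\<in>V. \<forall>v\<in>V. E u v \<longrightarrow> edg_adj X d (f u) (f v)))"

end

theory Submission imports Defs begin
lemma dist2: "dist (x::real^2) y = sqrt ((x$1-y$1)^2 + (x$2-y$2)^2)"
  unfolding dist_vec_def L2_set_def by (simp add: sum_2 dist_real_def)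
lemma vec2_eq: "(x::real^2) = y \<longleftrightarrow> x$1 = y$1 \<and> x$2 = y$2"
  by (simp add: vec_eq_iff forall_2)
lemma Z2_vec: "vector [of_int a, of_int b] \<in> Z2"
  unfolding Z2_def by (simp add: forall_2)
lemma Z2_floor: "x \<in> Z2 \<Longrightarrow> x = vector [of_int \<lfloor>x$1\<rfloor>, of_int \<lfloor>x$2\<rfloor>]"
  unfolding Z2_def by (simp add: vec2_eq)
lemma dist_vec_int: "dist (vector [of_int a, of_int b] :: real^2) (vector [of_int c, of_int d]) = sqrt (real n)
   \<longleftrightarrow> (a-c)^2 + (b-d)^2 = int n"
proof -
  have "dist (vector [of_int a, of_int b] :: real^2) (vector [of_int c, of_int d]) = sqrt (of_int ((a-c)^2 + (b-d)^2))"
    by (simp add: dist2)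
  also have "\<dots> = sqrt (real n) \<longleftrightarrow> of_int ((a-c)^2 + (b-d)^2) = (of_int (int n)::real)"
    by (simp del: of_int_power of_int_add of_int_diff)
  also have "\<dots> \<longleftrightarrow> (a-c)^2 + (b-d)^2 = int n" by (simp only: of_int_eq_iff)
  finally show ?thesis .
qed
lemma fwd:
  assumes inj: "inj_on f V" and img: "f ` V \<subseteq> Z2"
    and ed: "\<forall>u\<in>V. \<forall>v\<in>V. E u v \<longrightarrow> edg_adj Z2 (sqrt (real r)) (f u) (f v)"
  shows "subgraph_of_edg V E Z2 (sqrt (2 * real r))"
proof -
  define p where "p v = \<lfloor>f v $ 1\<rfloor>" for v
  define q where "q v = \<lfloor>f v $ 2\<rfloor>" for v
  have fv: "f v = vector [of_int (p v), of_int (q v)]" if "v \<in> V" for v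
    using Z2_floor[of "f v"] img that unfolding p_def q_def by auto
  define g where "g v = (vector [of_int (p v - q v), of_int (p v + q v)] :: real^2)" for v
  have "inj_on g V"
  proof (rule inj_onI)
    fix u v assume uv: "u \<in> V" "v \<in> V" "g u = g v"
    then have "p u - q u = p v - q v" "p u + q u = p v + q v"
      unfolding g_def by (simp_all add: vec2_eq)
    then have "p u = p v" "q u = q v" by linarith+
    then have "f u = f v" using fv uv by simp
    then show "u = v" using inj uv unfolding inj_on_def by blast
  qed
  moreover have "g ` V \<subseteq> Z2" unfolding g_def using Z2_vec by blast
  moreover have "edg_adj Z2 (sqrt (2 * real r)) (g u) (g v)" if uv: "u \<in> V" "v \<in> V" "E u v" for u v
  proof -
    have "dist (f u) (f v) = sqrt (real r)" using ed uv unfolding edg_adj_def by blast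
    then have h: "(p u - p v)^2 + (q u - q v)^2 = int r" using fv uv dist_vec_int by metis
    have "((p u - q u) - (p v - q v))^2 + ((p u + q u) - (p v + q v))^2 = 2 * ((p u - p v)^2 + (q u - q v)^2)"
      by algebra
    then have "((p u - q u) - (p v - q v))^2 + ((p u + q u) - (p v + q v))^2 = int (2 * r)" using h by simp
    then have "dist (g u) (g v) = sqrt (real (2*r))" unfolding g_def using dist_vec_int by metis
    moreover have "g u \<in> Z2" "g v \<in> Z2" unfolding g_def using Z2_vec by blast+
    ultimately show ?thesis unfolding edg_adj_def by simp
  qed
  ultimately show ?thesis unfolding subgraph_of_edg_def by blast
qed
lemma even_sq_sum: fixes a b :: int assumes "a^2 + b^2 = 2 * c" shows "even (a + b)"
proof -
  have "(a+b)^2 = 2 * (c + a*b)" using assms by (simp add: power2_eq_square algebra_simps)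
  then have "even ((a+b)^2)" by simp
  then show ?thesis by simp
qed

lemma half_sq: fixes a b A B :: int assumes "2*A = a + b" "2*B = b - a" "a^2+b^2 = 2*c"
  shows "A^2 + B^2 = c"
proof -
  have "4*(A^2+B^2) = (2*A)^2 + (2*B)^2" by (simp add: power2_eq_square)
  also have "\<dots> = (a+b)^2 + (b-a)^2" using assms by simp
  also have "\<dots> = 2*(a^2+b^2)" by (simp add: power2_eq_square algebra_simps)
  finally show ?thesis using assms(3) by simp
qed

lemma bwd:
  assumes fin: "finite V" and inj: "inj_on f V" and img: "f ` V \<subseteq> Z2"
    and ed: "\<forall>u\<in>V. \<forall>v\<in>V. E u v \<longrightarrow> edg_adj Z2 (sqrt (2 * real r)) (f u) (f v)"
  shows "subgraph_of_edg V E Z2 (sqrt (real r))"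
proof -
  define p where "p v = \<lfloor>f v $ 1\<rfloor>" for v
  define q where "q v = \<lfloor>f v $ 2\<rfloor>" for v
  have fv: "f v = vector [of_int (p v), of_int (q v)]" if "v \<in> V" for v
    using Z2_floor[of "f v"] img that unfolding p_def q_def by auto
  have edge: "(p u - p v)^2 + (q u - q v)^2 = 2 * int r" if uv: "u \<in> V" "v \<in> V" "E u v" for u v
  proof -
    have "dist (f u) (f v) = sqrt (real (2*r))" using ed uv unfolding edg_adj_def by simp
    then have "(p u - p v)^2 + (q u - q v)^2 = int (2*r)" using fv uv dist_vec_int by metis
    then show ?thesis by simp
  qed
  have par: "even (p u + q u) = even (p v + q v)" if uv: "u \<in> V" "v \<in> V" "E u v" for u v
  proof -
    have "even ((p u - p v) + (q u - q v))" using even_sq_sum edge[OF uv] by blast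
    moreover have "p u + q u = (p v + q v) + ((p u - p v) + (q u - q v))" by simp
    ultimately show ?thesis by (metis even_add)
  qed
  define M where "M = Max ((\<lambda>v. \<bar>p v\<bar>) ` V)"
  have Mb: "\<bar>p v\<bar> \<le> M" if "v \<in> V" for v unfolding M_def using fin that by simp
  define s where "s v = (if even (p v + q v) then 0 else 2*M+1)" for v
  define p' where "p' v = p v + s v" for v
  have ev: "even (p' v + q v)" for v unfolding p'_def s_def by auto
  have ev2: "even (q v - p' v)" for v
  proof -
    have "q v - p' v = (p' v + q v) - 2 * p' v" by simp
    then show ?thesis using ev[of v] by (metis dvd_diff dvd_triv_left)
  qed
  define g where "g v = (vector [of_int ((p' v + q v) div 2), of_int ((q v - p' v) div 2)] :: real^2)" for v
  have "inj_on g V"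
  proof (rule inj_onI)
    fix u v assume uv: "u \<in> V" "v \<in> V" "g u = g v"
    then have d: "(p' u + q u) div 2 = (p' v + q v) div 2" "(q u - p' u) div 2 = (q v - p' v) div 2"
      unfolding g_def by (simp_all add: vec2_eq)
    have "p' u + q u = p' v + q v" using d(1) ev[of u] ev[of v] by (metis dvd_mult_div_cancel)
    moreover have "q u - p' u = q v - p' v" using d(2) ev2[of u] ev2[of v] by (metis dvd_mult_div_cancel)
    ultimately have e: "p' u = p' v" "q u = q v" by linarith+
    have "p u = p v"
    proof (cases "even (p u + q u) = even (p v + q v)")
      case True
      then have "s u = s v" unfolding s_def by simp
      then show ?thesis using e unfolding p'_def by simp
    next
      case False
      then have "(s u = 0 \<and> s v = 2*M+1) \<or> (s u = 2*M+1 \<and> s v = 0)" unfolding s_def by auto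
      then have "p u = p v + 2*M+1 \<or> p u + 2*M+1 = p v" using e(1) unfolding p'_def by auto
      then show ?thesis using Mb[OF uv(1)] Mb[OF uv(2)] by linarith
    qed
    then have "f u = f v" using fv uv e by simp
    then show "u = v" using inj uv unfolding inj_on_def by blast
  qed
  moreover have "g ` V \<subseteq> Z2" unfolding g_def using Z2_vec by blast
  moreover have "edg_adj Z2 (sqrt (real r)) (g u) (g v)" if uv: "u \<in> V" "v \<in> V" "E u v" for u v
  proof -
    have ss: "s u = s v" using par[OF uv] unfolding s_def by simp
    define A where "A = (p' u + q u) div 2 - (p' v + q v) div 2"
    define B where "B = (q u - p' u) div 2 - (q v - p' v) div 2"
    have h2: "2 * (x div 2) = x" if "even x" for x :: int using that by simp
    have "2*A = 2*((p' u + q u) div 2) - 2*((p' v + q v) div 2)" unfolding A_def by simp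
    also have "\<dots> = (p' u + q u) - (p' v + q v)" using h2 ev by simp
    finally have "2*A = (p u - p v) + (q u - q v)" using ss unfolding p'_def by simp
    moreover have "2*B = 2*((q u - p' u) div 2) - 2*((q v - p' v) div 2)" unfolding B_def by simp
    moreover have "\<dots> = (q u - p' u) - (q v - p' v)" using h2 ev2 by simp
    ultimately have "2*B = (q u - q v) - (p u - p v)" "2*A = (p u - p v) + (q u - q v)" using ss unfolding p'_def by simp_all
    then have "A^2 + B^2 = int r" using half_sq edge[OF uv] by blast
    then have "((p' u + q u) div 2 - (p' v + q v) div 2)^2 + ((q u - p' u) div 2 - (q v - p' v) div 2)^2 = int r"
      unfolding A_def B_def .
    then have "dist (g u) (g v) = sqrt (real r)" unfolding g_def using dist_vec_int by metis
    moreover have "g u \<in> Z2" "g v \<in> Z2" unfolding g_def using Z2_vec by blast+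
    ultimately show ?thesis unfolding edg_adj_def by simp
  qed
  ultimately show ?thesis unfolding subgraph_of_edg_def by blast
qed

theorem theorem1:
  fixes V :: "'a set" and E :: "'a \<Rightarrow> 'a \<Rightarrow> bool" and r :: nat
  assumes "simple_graph V E" and "r > 0"
  shows "subgraph_of_edg V E Z2 (sqrt (real r)) \<longleftrightarrow> subgraph_of_edg V E Z2 (sqrt (2 * real r))"
proof
  assume "subgraph_of_edg V E Z2 (sqrt (real r))"
  then show "subgraph_of_edg V E Z2 (sqrt (2 * real r))" using fwd unfolding subgraph_of_edg_def by metis
next
  assume "subgraph_of_edg V E Z2 (sqrt (2 * real r))"
  moreover have "finite V" using assms(1) unfolding simple_graph_def by blast
  ultimately show "subgraph_of_edg V E Z2 (sqrt (real r))" using bwd unfolding subgraph_of_edg_def by metis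
qed
end
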